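(* Let $(\Omega,\mathcal F,Q)$ be a probability space and $\pi>0$. Let $c:\mathbb R\to\mathbb R$ be non-decreasing and continuous, and let $\alpha_1:\mathbb R\times\Omega\to[0,\pi]$ be $\mathcal B(\mathbb R)\otimes\mathcal F$-measurable such that $g\mapsto\alpha_1(g)(\omega)$ is non-decreasing for almost all $\omega\in\Omega$. Let $\varepsilon$ be a random variable such that the map $\mathbb R\to[0,\pi]$, $x\mapsto \mathbb E^Q(\alpha_1(x+\varepsilon))=\int_\Omega\alpha_1(x+\varepsilon(\omega'))(\omega')\,Q(d\omega')$ is continuous. For each $g\in\mathbb R$ define $f^g:[0,\pi]\to\mathbb R$ by $$f^g(a)=a-\int_\Omega\alpha_1\big(g-c(a)+\varepsilon(\omega')\big)(\omega')\,Q(d\omega').$$ Then: (i) for each $g\in\mathbb R$ there exists a unique $\alpha_0(g)\in[0,\pi]$ with $f^g(\alpha_0(g))=0$; (ii) $\alpha_0(g)=\lim_{n\to\infty}a^g_n$, where $a^g_n=\tfrac12(\overline a^g_n+\underline a^g_n)$ with $\underline a^g_0=0$, $\overline a^g_0=\pi$, and $(\overline a^g_{n+1},\underline a^g_{n+1})=(a^g_n,\underline a^g_n)$ if $f^g(a^g_n)\ge 0$, $(\overline a^g_{n+1},\underline a^g_{n+1})=(\overline a^g_n,a^g_n)$ if $f^g(a^g_n)<0$; (iii) the map $\mathbb R\to[0,\pi]$, $g\mapsto\alpha_0(g)$, is non-decreasing and continuous. *)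

theory Defs
  imports "HOL-Probability.Probability"
begin

definition fg :: "'w measure \<Rightarrow> (real \<Rightarrow> real) \<Rightarrow> (real \<Rightarrow> 'w \<Rightarrow> real) \<Rightarrow> ('w \<Rightarrow> real)
                   \<Rightarrow> real \<Rightarrow> real \<Rightarrow> real" where
  "fg Q c \<alpha>1 \<epsilon> g a = a - (\<integral>\<omega>. \<alpha>1 (g - c a + \<epsilon> \<omega>) \<omega> \<partial>Q)"

fun bisect :: "(real \<Rightarrow> real) \<Rightarrow> real \<Rightarrow> nat \<Rightarrow> real \<times> real" where
  "bisect f p 0 = (p, 0)"
| "bisect f p (Suc n) =
     (let (u, l) = bisect f p n; m = (u + l) / 2
      in if f m \<ge> 0 then (m, l) else (u, m))"

definition bisect_mid :: "(real \<Rightarrow> real) \<Rightarrow> real \<Rightarrow> nat \<Rightarrow> real" where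
  "bisect_mid f p n = (fst (bisect f p n) + snd (bisect f p n)) / 2"

end

theory Submission
  imports Defs
begin

lemma bisect_inv:
  fixes f :: "real \<Rightarrow> real" and p r :: real
  assumes up: "\<And>x. f x \<ge> 0 \<Longrightarrow> r \<le> x" and lo: "\<And>x. f x < 0 \<Longrightarrow> x \<le> r"
    and r: "0 \<le> r" "r \<le> p"
  shows "snd (bisect f p n) \<le> r \<and> r \<le> fst (bisect f p n)
         \<and> fst (bisect f p n) - snd (bisect f p n) = p / 2 ^ n"
proof (induction n)
  case 0
  then show ?case using r by simp
next
  case (Suc n)
  obtain u l where ul: "bisect f p n = (u, l)" by (cases "bisect f p n")
  show ?case
  proof (cases "f ((u + l) / 2) \<ge> 0")
    case True
    then show ?thesis using Suc ul up[OF True] by (simp add: Let_def field_simps)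
  next
    case False
    then have neg: "f ((u + l) / 2) < 0" by simp
    show ?thesis using Suc ul lo[OF neg] False by (simp add: Let_def field_simps)
  qed
qed

lemma bisect_conv:
  fixes f :: "real \<Rightarrow> real" and p r :: real
  assumes up: "\<And>x. f x \<ge> 0 \<Longrightarrow> r \<le> x" and lo: "\<And>x. f x < 0 \<Longrightarrow> x \<le> r"
    and r: "0 \<le> r" "r \<le> p"
  shows "(\<lambda>n. bisect_mid f p n) \<longlonglongrightarrow> r"
proof (rule tendsto_sandwich[where f="\<lambda>n. r - p / 2 ^ n" and h="\<lambda>n. r + p / 2 ^ n"])
  have I: "snd (bisect f p n) \<le> r \<and> r \<le> fst (bisect f p n)
         \<and> fst (bisect f p n) - snd (bisect f p n) = p / 2 ^ n" for n
    by (rule bisect_inv[OF up lo r])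
  have "r - p / 2 ^ n \<le> bisect_mid f p n \<and> bisect_mid f p n \<le> r + p / 2 ^ n" for n
  proof -
    define u l d where "u = fst (bisect f p n)" "l = snd (bisect f p n)" "d = p / 2 ^ n"
    have "l \<le> r" "r \<le> u" "u - l = d" using I[of n] by (auto simp: u_l_d_def)
    moreover have "d \<ge> 0" using r by (simp add: u_l_d_def)
    ultimately have "r - d \<le> (u + l) / 2 \<and> (u + l) / 2 \<le> r + d" by (auto simp: field_simps)
    then show ?thesis by (simp add: u_l_d_def bisect_mid_def)
  qed
  then show "\<forall>\<^sub>F n in sequentially. r - p / 2 ^ n \<le> bisect_mid f p n"
    "\<forall>\<^sub>F n in sequentially. bisect_mid f p n \<le> r + p / 2 ^ n"
    by (auto intro: always_eventually)
  have "(\<lambda>n. p / 2 ^ n :: real) \<longlonglongrightarrow> 0" by (rule LIMSEQ_divide_realpow_zero) simp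
  then show "(\<lambda>n. r - p / 2 ^ n) \<longlonglongrightarrow> r" "(\<lambda>n. r + p / 2 ^ n) \<longlonglongrightarrow> r"
    using tendsto_diff[OF tendsto_const, of _ 0 sequentially r]
      tendsto_add[OF tendsto_const, of _ 0 sequentially r] by auto
qed

theorem lemma1:
  fixes Q :: "'w measure" and p :: real and c :: "real \<Rightarrow> real"
    and \<alpha>1 :: "real \<Rightarrow> 'w \<Rightarrow> real" and \<epsilon> :: "'w \<Rightarrow> real"
  assumes "prob_space Q"
    and "p > 0"
    and "mono c" and "continuous_on UNIV c"
    and "(\<lambda>(g, \<omega>). \<alpha>1 g \<omega>) \<in> borel_measurable (borel \<Otimes>\<^sub>M Q)"
    and "\<And>g \<omega>. \<omega> \<in> space Q \<Longrightarrow> \<alpha>1 g \<omega> \<in> {0..p}"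
    and "AE \<omega> in Q. mono (\<lambda>g. \<alpha>1 g \<omega>)"
    and "\<epsilon> \<in> borel_measurable Q"
    and "continuous_on UNIV (\<lambda>x. \<integral>\<omega>. \<alpha>1 (x + \<epsilon> \<omega>) \<omega> \<partial>Q)"
  shows "\<exists>\<alpha>0 :: real \<Rightarrow> real.
           (\<forall>g. \<alpha>0 g \<in> {0..p} \<and> fg Q c \<alpha>1 \<epsilon> g (\<alpha>0 g) = 0
                \<and> (\<forall>a\<in>{0..p}. fg Q c \<alpha>1 \<epsilon> g a = 0 \<longrightarrow> a = \<alpha>0 g))
         \<and> (\<forall>g. (\<lambda>n. bisect_mid (fg Q c \<alpha>1 \<epsilon> g) p n) \<longlonglongrightarrow> \<alpha>0 g)
         \<and> mono \<alpha>0 \<and> continuous_on UNIV \<alpha>0"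
proof -
  interpret prob_space Q by fact
  define H where "H x = (\<integral>\<omega>. \<alpha>1 (x + \<epsilon> \<omega>) \<omega> \<partial>Q)" for x
  define F where "F g a = fg Q c \<alpha>1 \<epsilon> g a" for g a
  have F: "F g a = a - H (g - c a)" for g a
    by (simp add: F_def fg_def H_def)
  have meas: "(\<lambda>\<omega>. \<alpha>1 (x + \<epsilon> \<omega>) \<omega>) \<in> borel_measurable Q" for x
  proof -
    have "(\<lambda>\<omega>. (x + \<epsilon> \<omega>, \<omega>)) \<in> measurable Q (borel \<Otimes>\<^sub>M Q)"
      using assms(8) by measurable
    from measurable_comp[OF this assms(5)] show ?thesis by (simp add: o_def)
  qed
  have int: "integrable Q (\<lambda>\<omega>. \<alpha>1 (x + \<epsilon> \<omega>) \<omega>)" for x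
    by (rule integrable_const_bound[where B=p]) (use meas assms(6) in auto)
  have H01: "H x \<in> {0..p}" for x
  proof -
    have "0 \<le> H x" unfolding H_def by (rule integral_nonneg_AE) (use assms(6) in auto)
    moreover have "H x \<le> (\<integral>\<omega>. p \<partial>Q)" unfolding H_def
      by (rule integral_mono_AE) (use int assms(6) in auto)
    ultimately show ?thesis by (simp add: prob_space)
  qed
  have Hmono: "H x \<le> H y" if "x \<le> y" for x y
    unfolding H_def
    by (rule integral_mono_AE[OF int int]) (use assms(7) that in \<open>auto simp: mono_def\<close>)
  have Hcont: "isCont H x" for x
    using assms(9) unfolding H_def[abs_def] by (simp add: continuous_on_eq_continuous_at)
  have ccont: "isCont c x" for x
    using assms(4) by (simp add: continuous_on_eq_continuous_at)
  have Fstrict: "F g a < F g b" if "a < b" for g a b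
  proof -
    have "c a \<le> c b" using assms(3) that by (simp add: mono_def)
    then have "H (g - c b) \<le> H (g - c a)" by (intro Hmono) simp
    then show ?thesis using that by (simp add: F)
  qed
  have Fcont: "isCont (F g) a" for g a
    unfolding F[abs_def]
    by (intro continuous_intros continuous_at_compose[OF _ Hcont, unfolded o_def] ccont)
  have Fcont2: "isCont (\<lambda>g. F g a) g" for g a
    unfolding F
    by (intro continuous_intros continuous_at_compose[OF _ Hcont, unfolded o_def])
  have ex: "\<exists>a. 0 \<le> a \<and> a \<le> p \<and> F g a = 0" for g
  proof (rule IVT')
    show "F g 0 \<le> 0" using H01 by (simp add: F)
    show "0 \<le> F g p" using H01 by (simp add: F)
    show "0 \<le> p" using assms(2) by simp
    show "continuous_on {0..p} (F g)"
      using Fcont by (simp add: continuous_at_imp_continuous_on)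
  qed
  have uniq: "a = b" if "F g a = 0" "F g b = 0" for g a b
    using Fstrict[of a b g] Fstrict[of b a g] that by (cases a b rule: linorder_cases) auto
  define A where "A g = (SOME a. 0 \<le> a \<and> a \<le> p \<and> F g a = 0)" for g
  have A: "0 \<le> A g \<and> A g \<le> p \<and> F g (A g) = 0" for g
    unfolding A_def by (rule someI_ex[OF ex])
  have up: "A g \<le> x" if "F g x \<ge> 0" for g x
    using Fstrict[of x "A g" g] A[of g] that by (cases "x < A g") auto
  have lo: "x \<le> A g" if "F g x < 0" for g x
    using Fstrict[of "A g" x g] A[of g] that by (cases "A g < x") auto
  have Amono: "mono A"
  proof (rule monoI)
    fix g g' :: real assume "g \<le> g'"
    have "F g' (A g) \<le> F g (A g)"
      unfolding F by (intro diff_left_mono Hmono) (use \<open>g \<le> g'\<close> in simp)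
    then have "F g' (A g) \<le> 0" using A[of g] by simp
    show "A g \<le> A g'"
    proof (rule ccontr)
      assume "\<not> A g \<le> A g'"
      then have "F g' (A g') < F g' (A g)" by (intro Fstrict) simp
      then show False using A[of g'] \<open>F g' (A g) \<le> 0\<close> by simp
    qed
  qed
  have Acont: "isCont A g" for g
    unfolding isCont_def
  proof (rule tendstoI)
    fix e :: real assume e: "e > 0"
    have ev1: "\<forall>\<^sub>F x in at g. A g - e < A x"
    proof (cases "A g - e < 0")
      case True show ?thesis
      proof (intro always_eventually allI)
        fix x show "A g - e < A x" using A[of x] True by linarith
      qed
    next
      case False
      have "F g (A g - e) < 0" using Fstrict[of "A g - e" "A g" g] A[of g] e by simp
      then have "\<forall>\<^sub>F x in at g. F x (A g - e) < 0"
        using Fcont2[of g "A g - e"] by (auto simp: isCont_def dest: order_tendstoD)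
      then show ?thesis
      proof (rule eventually_mono)
        fix x assume "F x (A g - e) < 0"
        moreover have "A x \<noteq> A g - e" using calculation A[of x] by auto
        ultimately show "A g - e < A x"
          using Fstrict[of "A x" "A g - e" x] A[of x] by (cases "A x \<le> A g - e") auto
      qed
    qed
    have ev2: "\<forall>\<^sub>F x in at g. A x < A g + e"
    proof (cases "A g + e > p")
      case True show ?thesis
      proof (intro always_eventually allI)
        fix x show "A x < A g + e" using A[of x] True by linarith
      qed
    next
      case False
      have "F g (A g + e) > 0" using Fstrict[of "A g" "A g + e" g] A[of g] e by simp
      then have "\<forall>\<^sub>F x in at g. F x (A g + e) > 0"
        using Fcont2[of g "A g + e"] by (auto simp: isCont_def dest: order_tendstoD)
      then show ?thesis
      proof (rule eventually_mono)
        fix x assume "F x (A g + e) > 0"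
        moreover have "A x \<noteq> A g + e" using calculation A[of x] by auto
        ultimately show "A x < A g + e"
          using Fstrict[of "A g + e" "A x" x] A[of x] by (cases "A g + e \<le> A x") auto
      qed
    qed
    show "\<forall>\<^sub>F x in at g. dist (A x) (A g) < e"
      using eventually_conj[OF ev1 ev2] by eventually_elim (simp add: dist_real_def abs_less_iff)
  qed
  show ?thesis
  proof (intro exI[of _ A] conjI allI ballI impI)
    fix g show "A g \<in> {0..p}" using A by simp
    show "fg Q c \<alpha>1 \<epsilon> g (A g) = 0" using A F_def by metis
  next
    fix g a assume "a \<in> {0..p}" "fg Q c \<alpha>1 \<epsilon> g a = 0"
    then show "a = A g" using uniq[of g a "A g"] A[of g] by (simp add: F_def)
  next
    fix g
    show "(\<lambda>n. bisect_mid (fg Q c \<alpha>1 \<epsilon> g) p n) \<longlonglongrightarrow> A g"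
      using bisect_conv[of "F g" "A g" p] up lo A by (simp add: F_def[abs_def])
  next
    show "mono A" by fact
    show "continuous_on UNIV A" using Acont by (simp add: continuous_at_imp_continuous_on)
  qed
qed

end
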